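(* Let $n$ be a composite positive integer. Then: (i) for every $a\in\,]n[=\{1,\dots,n\}$, $d_{\{a\}}(\mathbb{Z}_n)=n/\gcd(a,n)$; (ii) for every $a\in\,]n[$ with $\gcd(a,n)=1$, $d_{\{a,n-a\}}(\mathbb{Z}_n)=1+\lfloor\log_2 n\rfloor$; (iii) if $A=\{a\in\,]n[\,:\gcd(a,n)=1\}$, then $d_A(\mathbb{Z}_n)=1+\Omega(n)$, where $\Omega(n)$ is the number of prime factors of $n$ counted with multiplicity; (iv) if $A=\,]n-1[=\{1,\dots,n-1\}$, then $d_A(\mathbb{Z}_n)=2$.
   Context: For an integer $x\ge1$, $]x[=\{1,2,\dots,x\}$. Let $G$ be a finite abelian group (written additively) of exponent $n$ and let $\emptyset\ne A\subseteq\, ]n[$. The constant $d_A(G)$ is the least positive integer $t$ such that for every sequence $g_1,\dots,g_t$ of (not necessarily distinct) elements of $G$ there exist $\ell\ge1$, indices $1\le i_1<\dots<i_\ell\le t$ and elements $a_1,\dots,a_\ell\in A$ (repetitions allowed) with $\sum_{j=1}^{\ell}a_j g_{i_j}=0$ in $G$. *)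

theory Defs
  imports "HOL-Computational_Algebra.Primes" "HOL-Number_Theory.Cong" Complex_Main
begin

text \<open>Elements of Z_n are represented by integers (taken modulo n).\<close>

definition has_A_zero_sum :: "nat \<Rightarrow> nat set \<Rightarrow> nat \<Rightarrow> bool" where
  "has_A_zero_sum n A t \<longleftrightarrow>
     (\<forall>g :: nat \<Rightarrow> int. \<exists>I c. I \<subseteq> {..<t} \<and> I \<noteq> {} \<and> (\<forall>i\<in>I. c i \<in> A) \<and>
        [(\<Sum>i\<in>I. int (c i) * g i) = 0] (mod int n))"

definition dA :: "nat \<Rightarrow> nat set \<Rightarrow> nat" where
  "dA n A = (LEAST t. t \<ge> 1 \<and> has_A_zero_sum n A t)"

end

theory Submission
  imports Defs
begin


lemma has_mono:
  assumes "has_A_zero_sum n A t" "t \<le> t'"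
  shows "has_A_zero_sum n A t'"
  using assms unfolding has_A_zero_sum_def by (meson lessThan_subset_iff order_trans)

lemma dA_eqI:
  assumes "has_A_zero_sum n A (Suc k)" "\<And>t. 1 \<le> t \<Longrightarrow> t \<le> k \<Longrightarrow> \<not> has_A_zero_sum n A t"
  shows "dA n A = Suc k"
  unfolding dA_def
proof (rule Least_equality)
  show "1 \<le> Suc k \<and> has_A_zero_sum n A (Suc k)" using assms by simp
next
  fix y assume "1 \<le> y \<and> has_A_zero_sum n A y"
  then show "Suc k \<le> y" using assms(2) by (meson not_less_eq_eq)
qed

lemma dA_eqI2:
  assumes "has_A_zero_sum n A (Suc k)" "k \<ge> 1 \<Longrightarrow> \<not> has_A_zero_sum n A k"
  shows "dA n A = Suc k"
  using assms by (intro dA_eqI) (auto dest: has_mono)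

lemma part4:
  assumes n: "1 < n"
  shows "dA n {1..n - 1} = 2"
proof -
  have "has_A_zero_sum n {1..n-1} 2"
    unfolding has_A_zero_sum_def
  proof
    fix g :: "nat \<Rightarrow> int"
    show "\<exists>I c. I \<subseteq> {..<2} \<and> I \<noteq> {} \<and> (\<forall>i\<in>I. c i \<in> {1..n-1}) \<and>
        [(\<Sum>i\<in>I. int (c i) * g i) = 0] (mod int n)"
    proof (cases "[g 0 = 0] (mod int n)")
      case True
      then show ?thesis
        by (rule_tac x="{0}" in exI, rule_tac x="\<lambda>_. 1" in exI) (use n in auto)
    next
      case g0: False
      show ?thesis
      proof (cases "coprime (g 1) (int n)")
        case False
        define d where "d = gcd (g 1) (int n)"
        have dpos: "d > 0" using n by (simp add: d_def)
        have d1: "d \<noteq> 1" using False by (simp add: d_def coprime_iff_gcd_eq_1)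
        have ddvd: "d dvd int n" by (simp add: d_def)
        then obtain e where e: "int n = d * e" by blast
        have "0 < d * e" using e n by simp
        then have epos: "e > 0" using dpos zero_less_mult_pos by blast
        have "d \<ge> 2" using dpos d1 by simp
        then have "1 * e < d * e" using epos by (intro mult_strict_right_mono) auto
        then have "e < int n" using e by simp
        have "d dvd g 1" by (simp add: d_def)
        then obtain f where f: "g 1 = d * f" by blast
        have "int (nat e) * g 1 = int n * f" using e f epos by simp
        then have "[int (nat e) * g 1 = 0] (mod int n)" by (simp add: cong_0_iff)
        moreover have "nat e \<in> {1..n-1}" using epos \<open>e < int n\<close> by auto
        ultimately show ?thesis
          by (rule_tac x="{1}" in exI, rule_tac x="\<lambda>_. nat e" in exI) auto
      next
        case True
        then obtain w where w: "[g 1 * w = 1] (mod int n)" using cong_solve_coprime_int by blast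
        define c1 where "c1 = (- g 0 * w) mod int n"
        have c1ge: "c1 \<ge> 0" "c1 < int n" using n by (simp_all add: c1_def)
        have c1cong: "[c1 = - g 0 * w] (mod int n)" by (simp add: c1_def cong_def)
        have "[c1 * g 1 = - g 0 * (g 1 * w)] (mod int n)"
          using cong_mult[OF c1cong cong_refl[of "g 1"]] by (simp add: algebra_simps)
        also have "[- g 0 * (g 1 * w) = - g 0 * 1] (mod int n)"
          by (rule cong_mult[OF cong_refl w])
        finally have key: "[c1 * g 1 = - g 0] (mod int n)" by simp
        have "c1 \<noteq> 0"
        proof
          assume "c1 = 0"
          then have "[0 = - g 0] (mod int n)" using key by simp
          then have "[g 0 = 0] (mod int n)"
            by (metis add.inverse_neutral cong_minus_minus_iff cong_sym)
          then show False using g0 by simp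
        qed
        have "[int 1 * g 0 + int (nat c1) * g 1 = g 0 + - g 0] (mod int n)"
          using cong_add[OF cong_refl[of "g 0"] key] c1ge by simp
        then have sum0: "[(\<Sum>i\<in>{0,1}. int ((\<lambda>i. if i = 0 then 1 else nat c1) i) * g i) = 0] (mod int n)"
          by simp
        have "nat c1 \<in> {1..n-1}" using c1ge \<open>c1 \<noteq> 0\<close> by auto
        then show ?thesis using n
          by (rule_tac x="{0,1}" in exI, rule_tac x="\<lambda>i. if i = 0 then 1 else nat c1" in exI)
             (use sum0 in auto)
      qed
    qed
  qed
  moreover have "\<not> has_A_zero_sum n {1..n-1} 1"
  proof
    assume "has_A_zero_sum n {1..n-1} 1"
    then obtain I :: "nat set" and c where I: "I \<subseteq> {..<1}" "I \<noteq> {}" "\<forall>i\<in>I. c i \<in> {1..n-1}"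
      "[(\<Sum>i\<in>I. int (c i) * (\<lambda>_. 1::int) i) = 0] (mod int n)"
      unfolding has_A_zero_sum_def by (elim allE[where x="\<lambda>_. 1::int"]) blast
    have "I = {0}" using I(1,2) by auto
    then have "[int (c 0) = 0] (mod int n)" "c 0 \<in> {1..n-1}" using I by auto
    then have "n dvd c 0" "0 < c 0" "c 0 < n" by (auto simp: cong_0_iff)
    then show False by (simp add: nat_dvd_not_less)
  qed
  ultimately show ?thesis using dA_eqI2[of n "{1..n-1}" 1] by (simp add: numeral_2_eq_2)
qed



lemma pigeon_prefix:
  fixes g :: "nat \<Rightarrow> int" and m :: nat
  assumes "m \<ge> 1"
  shows "\<exists>j1 j2. j1 < j2 \<and> j2 \<le> m \<and> [sum g {j1..<j2} = 0] (mod int m)"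
proof -
  define f where "f j = (sum g {..<j}) mod int m" for j
  have "f ` {..m} \<subseteq> {0..<int m}" using assms by (auto simp: f_def)
  then have "card (f ` {..m}) \<le> m" by (metis card_atLeastLessThan_int card_mono finite_atLeastLessThan_int diff_zero nat_int)
  then have "\<not> inj_on f {..m}" using card_image by fastforce
  then obtain x y where xy: "x \<le> m" "y \<le> m" "x \<noteq> y" "f x = f y" unfolding inj_on_def by auto
  have key: "[sum g {j1..<j2} = 0] (mod int m)" if "j1 < j2" "f j1 = f j2" for j1 j2
  proof -
    have "sum g {..<j2} = sum g {..<j1} + sum g {j1..<j2}"
      using that by (simp add: atLeast0LessThan[symmetric] sum.atLeastLessThan_concat)
    moreover have "[sum g {..<j2} = sum g {..<j1}] (mod int m)" using that by (simp add: f_def cong_def)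
    ultimately show ?thesis by (metis add.right_neutral cong_add_lcancel)
  qed
  show ?thesis
  proof (cases "x < y")
    case True then show ?thesis using key xy by blast
  next
    case False then have "y < x" using xy by simp
    then show ?thesis using key xy by (metis)
  qed
qed

lemma part1:
  assumes n: "1 < n" and a: "a \<in> {1..n}"
  shows "dA n {a} = n div gcd a n"
proof -
  define d where "d = gcd a n"
  define m where "m = n div d"
  define a' where "a' = a div d"
  have dpos: "d > 0" using n by (simp add: d_def)
  have nm: "n = d * m" by (simp add: d_def m_def)
  have aa: "a = d * a'" by (simp add: d_def a'_def)
  have m1: "m \<ge> 1" using nm n by (cases m) auto
  have cop: "coprime a' m" unfolding a'_def m_def d_def
    using n by (intro div_gcd_coprime) auto
  have has: "has_A_zero_sum n {a} m"
    unfolding has_A_zero_sum_def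
  proof
    fix g :: "nat \<Rightarrow> int"
    obtain j1 j2 where j: "j1 < j2" "j2 \<le> m" "[sum g {j1..<j2} = 0] (mod int m)"
      using pigeon_prefix[OF m1] by blast
    then obtain x where x: "sum g {j1..<j2} = int m * x" by (metis cong_0_iff dvd_def)
    have "(\<Sum>i\<in>{j1..<j2}. int a * g i) = int a * sum g {j1..<j2}" by (simp add: sum_distrib_left)
    also have "\<dots> = int n * (int a' * x)" using x by (simp add: nm aa)
    finally have "[(\<Sum>i\<in>{j1..<j2}. int ((\<lambda>_. a) i) * g i) = 0] (mod int n)" by (simp add: cong_0_iff)
    then show "\<exists>I c. I \<subseteq> {..<m} \<and> I \<noteq> {} \<and> (\<forall>i\<in>I. c i \<in> {a}) \<and>
        [(\<Sum>i\<in>I. int (c i) * g i) = 0] (mod int n)"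
      using j by (rule_tac x="{j1..<j2}" in exI, rule_tac x="\<lambda>_. a" in exI) auto
  qed
  have nothas: "\<not> has_A_zero_sum n {a} (m - 1)"
  proof
    assume "has_A_zero_sum n {a} (m - 1)"
    then obtain I :: "nat set" and c where I: "I \<subseteq> {..<m-1}" "I \<noteq> {}" "\<forall>i\<in>I. c i \<in> {a}"
      "[(\<Sum>i\<in>I. int (c i) * (\<lambda>_. 1::int) i) = 0] (mod int n)"
      unfolding has_A_zero_sum_def by (elim allE[where x="\<lambda>_. 1::int"]) blast
    have fin: "finite I" using I(1) finite_subset by blast
    have "(\<Sum>i\<in>I. int (c i) * (\<lambda>_. 1::int) i) = int (a * card I)"
      using I(3) by simp
    then have "n dvd a * card I" using I(4) by (metis cong_0_iff int_dvd_int_iff of_nat_0)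
    then have "d * m dvd d * (a' * card I)" using nm aa by (simp add: mult.assoc)
    then have "m dvd a' * card I" using dpos by simp
    then have "m dvd card I" using cop by (metis coprime_commute coprime_dvd_mult_right_iff)
    moreover have "card I > 0" using fin I(2) by auto
    moreover have "card I \<le> m - 1" using card_mono[OF _ I(1)] by simp
    ultimately show False using m1 by (meson diff_less dvd_imp_le leD less_le_trans zero_less_one)
  qed
  have "dA n {a} = Suc (m - 1)"
    using has nothas m1 by (intro dA_eqI2) auto
  then show ?thesis using m1 by (simp add: m_def d_def)
qed



lemma sum_pow2_int: "(\<Sum>i<k. (2::int)^i) = 2^k - 1"
  by (induction k) auto

lemma signed_pow2_nonzero:
  fixes I :: "nat set" and e :: "nat \<Rightarrow> int"
  assumes "finite I" "I \<noteq> {}" "\<forall>i\<in>I. e i = 1 \<or> e i = -1"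
  shows "(\<Sum>i\<in>I. e i * 2^i) \<noteq> 0"
proof
  assume E: "(\<Sum>i\<in>I. e i * 2^i) = 0"
  define j where "j = Min I"
  have jI: "j \<in> I" using assms j_def by simp
  have "(\<Sum>i\<in>I. e i * 2^i) = e j * 2^j + (\<Sum>i\<in>I - {j}. e i * 2^i)"
    using assms(1) jI by (simp add: sum.remove)
  moreover have "(2::int)^(Suc j) dvd (\<Sum>i\<in>I - {j}. e i * 2^i)"
  proof (rule dvd_sum)
    fix i assume "i \<in> I - {j}"
    then have "j < i" using assms(1) j_def by (metis DiffE Min_le insertI1 le_neq_implies_less)
    then have "(2::int)^(Suc j) dvd 2^i" by (metis Suc_leI le_imp_power_dvd)
    then show "(2::int)^(Suc j) dvd e i * 2^i" by simp
  qed
  ultimately have "(2::int)^(Suc j) dvd e j * 2^j" using E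
    by (metis add.commute add_diff_cancel_left' dvd_0_left_iff dvd_diff diff_zero)
  then have "(2::int)^(Suc j) dvd e j * (e j * 2^j)" by (rule dvd_mult)
  moreover have "e j * e j = 1" using assms(3) jI by auto
  ultimately have "(2::int)^(Suc j) dvd 2^j" by (metis mult.assoc mult_1)
  then have "(2::int) * 2^j dvd 1 * 2^j" by simp
  then have "(2::int) dvd 1" by (subst (asm) dvd_mult_cancel_right) auto
  then show False by simp
qed

lemma part2:
  assumes n: "1 < n" and a: "a \<in> {1..n}" and cop: "coprime a n"
  shows "dA n {a, n - a} = 1 + nat \<lfloor>log 2 (real n)\<rfloor>"
proof -
  define k where "k = nat \<lfloor>log 2 (real n)\<rfloor>"
  have "\<lfloor>log 2 (real n)\<rfloor> \<ge> 0" using n by simp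
  then have "\<lfloor>log (real 2) (real n)\<rfloor> = int k" by (simp add: k_def)
  then have kb: "2^k \<le> n" "n < 2^(k+1)"
    using floor_log_nat_eq_powr_iff[of 2 n k] n by auto
  have k1: "k \<ge> 1"
  proof (rule ccontr)
    assume "\<not> k \<ge> 1" then have "k = 0" by simp
    then show False using kb n by simp
  qed
  have an: "a < n"
  proof (rule ccontr)
    assume "\<not> a < n" then have "a = n" using a by auto
    then show False using cop n by simp
  qed
  have has: "has_A_zero_sum n {a, n - a} (Suc k)"
    unfolding has_A_zero_sum_def
  proof
    fix g :: "nat \<Rightarrow> int"
    define f where "f S = (sum g S) mod int n" for S
    have "f ` Pow {..<Suc k} \<subseteq> {0..<int n}" using n by (auto simp: f_def)
    then have "card (f ` Pow {..<Suc k}) \<le> n"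
      by (metis card_atLeastLessThan_int card_mono finite_atLeastLessThan_int diff_zero nat_int)
    moreover have "card (Pow {..<Suc k}) = 2^(Suc k)" by (simp add: card_Pow)
    ultimately have "\<not> inj_on f (Pow {..<Suc k})" using kb card_image by fastforce
    then obtain S T where ST: "S \<subseteq> {..<Suc k}" "T \<subseteq> {..<Suc k}" "S \<noteq> T" "f S = f T"
      unfolding inj_on_def by auto
    have finS: "finite S" "finite T" using ST finite_subset by blast+
    define I where "I = (S - T) \<union> (T - S)"
    define c where "c i = (if i \<in> S then a else n - a)" for i
    have Isub: "I \<subseteq> {..<Suc k}" using ST by (auto simp: I_def)
    have Ine: "I \<noteq> {}" using ST by (auto simp: I_def)
    have cA: "\<forall>i\<in>I. c i \<in> {a, n - a}" by (auto simp: c_def)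
    have "(\<Sum>i\<in>I. int (c i) * g i) = (\<Sum>i\<in>S - T. int (c i) * g i) + (\<Sum>i\<in>T - S. int (c i) * g i)"
      unfolding I_def using finS by (intro sum.union_disjoint) auto
    also have "(\<Sum>i\<in>S - T. int (c i) * g i) = int a * sum g (S - T)"
      by (simp add: c_def sum_distrib_left)
    also have "(\<Sum>i\<in>T - S. int (c i) * g i) = (int n - int a) * sum g (T - S)"
      using an by (simp add: c_def sum_distrib_left of_nat_diff)
    finally have eq1: "(\<Sum>i\<in>I. int (c i) * g i) = int a * (sum g (S - T) - sum g (T - S)) + int n * sum g (T - S)"
      by (simp add: algebra_simps)
    have "sum g S = sum g (S \<inter> T) + sum g (S - T)" "sum g T = sum g (T \<inter> S) + sum g (T - S)"
      using finS by (simp_all add: sum.Int_Diff)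
    then have "sum g (S - T) - sum g (T - S) = sum g S - sum g T" by (simp add: Int_commute)
    moreover have "int n dvd sum g S - sum g T" using ST(4)
      by (simp add: f_def mod_eq_dvd_iff)
    ultimately have dd: "int n dvd sum g (S - T) - sum g (T - S)" by simp
    then have "int n dvd int a * (sum g (S - T) - sum g (T - S)) + int n * sum g (T - S)"
      using dvd_add[OF dvd_mult[OF dd, of "int a"] dvd_triv_left[of "int n" "sum g (T - S)"]] by simp
    then have "[(\<Sum>i\<in>I. int (c i) * g i) = 0] (mod int n)" using eq1 by (simp add: cong_0_iff)
    then show "\<exists>I c. I \<subseteq> {..<Suc k} \<and> I \<noteq> {} \<and> (\<forall>i\<in>I. c i \<in> {a, n - a}) \<and>
        [(\<Sum>i\<in>I. int (c i) * g i) = 0] (mod int n)"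
      using Isub Ine cA by blast
  qed
  have nothas: "\<not> has_A_zero_sum n {a, n - a} k"
  proof
    assume "has_A_zero_sum n {a, n - a} k"
    then obtain I :: "nat set" and c where I: "I \<subseteq> {..<k}" "I \<noteq> {}" "\<forall>i\<in>I. c i \<in> {a, n - a}"
      "[(\<Sum>i\<in>I. int (c i) * (\<lambda>i. (2::int)^i) i) = 0] (mod int n)"
      unfolding has_A_zero_sum_def by (elim allE[where x="\<lambda>i. (2::int)^i"]) blast
    have fin: "finite I" using I(1) finite_subset by blast
    define e where "e i = (if c i = a then (1::int) else -1)" for i
    have ce: "int (c i) = int a * e i + (if c i = a then 0 else int n)" if "i \<in> I" for i
      using I(3) that an by (auto simp: e_def of_nat_diff)
    have "(\<Sum>i\<in>I. int (c i) * 2^i) = (\<Sum>i\<in>I. int a * (e i * 2^i) + int n * (if c i = a then 0 else 2^i))"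
      by (rule sum.cong) (auto simp: ce algebra_simps)
    also have "\<dots> = int a * (\<Sum>i\<in>I. e i * 2^i) + int n * (\<Sum>i\<in>I. (if c i = a then 0 else 2^i))"
      by (simp add: sum.distrib sum_distrib_left)
    finally have "(\<Sum>i\<in>I. int (c i) * 2^i) = int a * (\<Sum>i\<in>I. e i * 2^i) + int n * (\<Sum>i\<in>I. (if c i = a then 0 else 2^i))" .
    moreover have "int n dvd (\<Sum>i\<in>I. int (c i) * 2^i)" using I(4) by (simp add: cong_0_iff)
    ultimately have "int n dvd int a * (\<Sum>i\<in>I. e i * 2^i) + int n * (\<Sum>i\<in>I. (if c i = a then 0 else 2^i))"
      by simp
    then have "int n dvd int a * (\<Sum>i\<in>I. e i * 2^i)"
      using dvd_add_left_iff[of "int n" "int n * (\<Sum>i\<in>I. (if c i = a then 0 else 2^i))"] by simp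
    then have dv: "int n dvd (\<Sum>i\<in>I. e i * 2^i)" using cop
      by (metis coprime_dvd_mult_right_iff coprime_commute coprime_int_iff)
    have ne: "(\<Sum>i\<in>I. e i * 2^i) \<noteq> 0" using fin I(2) by (intro signed_pow2_nonzero) (auto simp: e_def)
    have "\<bar>\<Sum>i\<in>I. e i * 2^i\<bar> \<le> (\<Sum>i\<in>I. \<bar>e i * 2^i\<bar>)" by (rule sum_abs)
    also have "\<dots> = (\<Sum>i\<in>I. (2::int)^i)" by (intro sum.cong) (auto simp: e_def abs_mult)
    also have "\<dots> \<le> (\<Sum>i<k. (2::int)^i)" using I(1) by (intro sum_mono2) auto
    also have "\<dots> < int n"
    proof -
      have "int (2^k) \<le> int n" using kb(1) by (simp only: of_nat_le_iff)
      then have h: "(2::int)^k \<le> int n" by simp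
      show ?thesis unfolding sum_pow2_int using h by linarith
    qed
    finally have "\<bar>\<Sum>i\<in>I. e i * 2^i\<bar> < int n" .
    moreover have "\<bar>int n\<bar> \<le> \<bar>\<Sum>i\<in>I. e i * 2^i\<bar>" using dv ne by (rule dvd_imp_le_int[rotated])
    ultimately show False by simp
  qed
  have "dA n {a, n - a} = Suc k" using has nothas by (intro dA_eqI2) auto
  then show ?thesis by (simp add: k_def)
qed



definition bitp :: "nat \<Rightarrow> nat \<Rightarrow> int \<Rightarrow> bool" where
  "bitp p l x \<longleftrightarrow> (int p)^l dvd x \<and> \<not> (int p)^(Suc l) dvd x"

lemma bitp_unique:
  assumes "bitp p l x" "bitp p l' x" shows "l = l'"
proof (rule ccontr)
  assume "l \<noteq> l'"
  then consider "Suc l \<le> l'" | "Suc l' \<le> l" by linarith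
  then show False
  proof cases
    case 1 then have "(int p)^(Suc l) dvd (int p)^l'" by (rule le_imp_power_dvd)
    then show False using assms unfolding bitp_def using dvd_trans by blast
  next
    case 2 then have "(int p)^(Suc l') dvd (int p)^l" by (rule le_imp_power_dvd)
    then show False using assms unfolding bitp_def using dvd_trans by blast
  qed
qed

lemma no_bit_dvd:
  assumes "\<forall>l<a. \<not> bitp p l x" shows "(int p)^a dvd x"
proof -
  have "l \<le> a \<Longrightarrow> (int p)^l dvd x" for l
  proof (induction l)
    case 0 then show ?case by simp
  next
    case (Suc l)
    then have "(int p)^l dvd x" "l < a" by auto
    then show ?case using assms unfolding bitp_def by blast
  qed
  then show ?thesis by simp
qed

lemma local_weights:
  fixes g :: "nat \<Rightarrow> int" and p a :: nat
  assumes p: "prime p"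
  shows "finite F \<Longrightarrow> (\<forall>l<a. even (card {i\<in>F. bitp p l (g i)})) \<Longrightarrow>
     \<exists>v::nat\<Rightarrow>nat. (\<forall>i. \<not> p dvd v i) \<and> (int p)^a dvd (\<Sum>i\<in>F. int (v i) * g i)"
proof (induction F rule: finite_psubset_induct)
  case (psubset F)
  show ?case
  proof (cases "\<exists>x\<in>F. \<exists>l<a. bitp p l (g x)")
    case False
    then have "\<forall>x\<in>F. (int p)^a dvd g x" using no_bit_dvd by blast
    then have "(int p)^a dvd (\<Sum>i\<in>F. int ((\<lambda>_. 1::nat) i) * g i)" by (auto intro: dvd_sum)
    moreover have "p > 1" using p prime_gt_1_nat by blast
    then have "\<not> p dvd 1" by simp
    ultimately show ?thesis by (intro exI[of _ "\<lambda>_. 1::nat"]) simp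
  next
    case True
    then obtain x l where x: "x \<in> F" "l < a" "bitp p l (g x)" by blast
    define B where "B = {i\<in>F. bitp p l (g i)}"
    have evB: "even (card B)" using psubset.prems x(2) by (simp add: B_def)
    have xB: "x \<in> B" using x by (simp add: B_def)
    have finB: "finite B" using psubset.hyps by (simp add: B_def)
    have "card B \<noteq> 0" using finB xB by auto
    then have "card B \<ge> 2" using evB by presburger
    then have "card (B - {x}) \<ge> 1" using xB finB by (simp add: card_Diff_singleton)
    then obtain y where yB: "y \<in> B" and yx: "y \<noteq> x"
      by (metis Diff_eq_empty_iff One_nat_def card.empty empty_subsetI insert_subset not_one_le_zero subsetI insertE Diff_iff all_not_in_conv)
    have y: "y \<in> F" "bitp p l (g y)" using yB by (auto simp: B_def)
    define F' where "F' = F - {x, y}"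
    have sub: "F' \<subset> F" using x(1) by (auto simp: F'_def)
    have even': "\<forall>l'<a. even (card {i\<in>F'. bitp p l' (g i)})"
    proof (intro allI impI)
      fix l' assume "l' < a"
      have ev: "even (card {i\<in>F. bitp p l' (g i)})" using psubset.prems \<open>l'<a\<close> by blast
      show "even (card {i\<in>F'. bitp p l' (g i)})"
      proof (cases "l' = l")
        case True
        then have eq: "{i\<in>F'. bitp p l' (g i)} = B - {x,y}" by (auto simp: F'_def B_def)
        have "{x,y} \<subseteq> B" using xB yB by auto
        then have "card (B - {x,y}) = card B - 2" using finB yx by (simp add: card_Diff_subset)
        then show ?thesis using eq evB \<open>card B \<ge> 2\<close> by simp
      next
        case False
        have "\<not> bitp p l' (g x)" "\<not> bitp p l' (g y)" using bitp_unique x(3) y(2) False by blast+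
        then have "{i\<in>F'. bitp p l' (g i)} = {i\<in>F. bitp p l' (g i)}" by (auto simp: F'_def)
        then show ?thesis using ev by simp
      qed
    qed
    obtain v where v: "\<forall>i. \<not> p dvd v i" "(int p)^a dvd (\<Sum>i\<in>F'. int (v i) * g i)"
      using psubset.IH[OF sub] even' by blast
    from x(3) obtain x' where gx: "g x = (int p)^l * x'" unfolding bitp_def by (auto elim: dvdE)
    from y(2) obtain y' where gy: "g y = (int p)^l * y'" unfolding bitp_def by (auto elim: dvdE)
    have x'p: "\<not> int p dvd x'"
    proof
      assume "int p dvd x'" then have "(int p)^(Suc l) dvd g x" using gx by (simp add: mult_dvd_mono)
      then show False using x(3) by (simp add: bitp_def)
    qed
    have y'p: "\<not> int p dvd y'"
    proof
      assume "int p dvd y'" then have "(int p)^(Suc l) dvd g y" using gy by (simp add: mult_dvd_mono)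
      then show False using y(2) by (simp add: bitp_def)
    qed
    define q where "q = (int p)^a"
    have qpos: "q > 0" using p by (simp add: q_def prime_gt_0_nat)
    have pq: "int p dvd q" using x(2) by (simp add: q_def dvd_power)
    define v2 where "v2 = v(x := nat (y' mod q), y := nat ((- x') mod q))"
    have v2x: "int (v2 x) = y' mod q" using yx qpos by (simp add: v2_def)
    have v2y: "int (v2 y) = (- x') mod q" using qpos by (simp add: v2_def)
    have v2o: "v2 i = v i" if "i \<in> F'" for i using that by (auto simp: v2_def F'_def)
    have ndv: "\<not> p dvd v2 i" for i
    proof (cases "i = y")
      case True
      show ?thesis
      proof
        assume "p dvd v2 i"
        then have "int p dvd int (v2 y)" using True by (simp add: int_dvd_int_iff)
        then have "int p dvd (- x') mod q" using v2y by simp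
        then have "int p dvd - x'" using pq by (simp add: dvd_mod_iff)
        then show False using x'p by simp
      qed
    next
      case False
      show ?thesis
      proof (cases "i = x")
        case True
        show ?thesis
        proof
          assume "p dvd v2 i"
          then have "int p dvd int (v2 x)" using True by (simp add: int_dvd_int_iff)
          then have "int p dvd y' mod q" using v2x by simp
          then have "int p dvd y'" using pq by (simp add: dvd_mod_iff)
          then show False using y'p by simp
        qed
      next
        case False
        then show ?thesis using \<open>i \<noteq> y\<close> v(1) by (simp add: v2_def)
      qed
    qed
    have Fdec: "F = insert x (insert y F')" using x(1) y(1) by (auto simp: F'_def)
    have finF': "finite F'" using psubset.hyps by (simp add: F'_def)
    have "(\<Sum>i\<in>F. int (v2 i) * g i) = int (v2 x) * g x + (int (v2 y) * g y + (\<Sum>i\<in>F'. int (v2 i) * g i))"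
      unfolding Fdec using finF' yx by (simp add: F'_def)
    also have "(\<Sum>i\<in>F'. int (v2 i) * g i) = (\<Sum>i\<in>F'. int (v i) * g i)"
      by (intro sum.cong) (auto simp: v2o)
    finally have sumeq: "(\<Sum>i\<in>F. int (v2 i) * g i) = int (v2 x) * g x + int (v2 y) * g y + (\<Sum>i\<in>F'. int (v i) * g i)"
      by simp
    have m1: "y' mod q = y' - y' div q * q" by (simp add: minus_div_mult_eq_mod)
    have m2: "(- x') mod q = - x' - (- x') div q * q" by (simp add: minus_div_mult_eq_mod)
    have "int (v2 x) * g x + int (v2 y) * g y = q * (- (y' div q) * (int p)^l * x' - ((- x') div q) * (int p)^l * y')"
      unfolding v2x v2y m1 m2 gx gy by (simp add: algebra_simps)
    then have "q dvd int (v2 x) * g x + int (v2 y) * g y" by simp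
    then have "q dvd (\<Sum>i\<in>F. int (v2 i) * g i)" using sumeq v(2) by (simp add: q_def)
    then show ?thesis using ndv unfolding q_def by blast
  qed
qed



lemma card_symdiff_parity:
  assumes "finite S" "finite T"
  shows "card {i\<in>(S-T)\<union>(T-S). P i} + 2 * card {i\<in>S\<inter>T. P i} = card {i\<in>S. P i} + card {i\<in>T. P i}"
proof -
  define A1 where "A1 = {i\<in>S-T. P i}"
  define A2 where "A2 = {i\<in>T-S. P i}"
  define A3 where "A3 = {i\<in>S\<inter>T. P i}"
  have f: "finite A1" "finite A2" "finite A3" using assms by (auto simp: A1_def A2_def A3_def)
  have e1: "{i\<in>(S-T)\<union>(T-S). P i} = A1 \<union> A2" by (auto simp: A1_def A2_def)
  have e2: "{i\<in>S. P i} = A1 \<union> A3" by (auto simp: A1_def A3_def)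
  have e3: "{i\<in>T. P i} = A2 \<union> A3" by (auto simp: A2_def A3_def)
  have d: "A1 \<inter> A2 = {}" "A1 \<inter> A3 = {}" "A2 \<inter> A3 = {}" by (auto simp: A1_def A2_def A3_def)
  have c1: "card {i\<in>(S-T)\<union>(T-S). P i} = card A1 + card A2" unfolding e1 using f d by (simp add: card_Un_disjoint)
  have c2: "card {i\<in>S. P i} = card A1 + card A3" unfolding e2 using f d by (simp add: card_Un_disjoint)
  have c3: "card {i\<in>T. P i} = card A2 + card A3" unfolding e3 using f d by (simp add: card_Un_disjoint)
  show ?thesis unfolding c1 c2 c3 A3_def[symmetric] by simp
qed

lemma prod_dvd_int:
  fixes m :: "'a \<Rightarrow> int"
  assumes "finite A" "\<forall>i\<in>A. \<forall>j\<in>A. i \<noteq> j \<longrightarrow> coprime (m i) (m j)" "\<forall>i\<in>A. m i dvd X"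
  shows "prod m A dvd X"
  using assms
proof (induction A rule: finite_induct)
  case empty then show ?case by simp
next
  case (insert x A)
  have "coprime (m x) (prod m A)" using insert by (intro prod_coprime_right) auto
  then show ?case using insert by (simp add: divides_mult)
qed

lemma part3_upper:
  assumes n: "1 < n"
  shows "has_A_zero_sum n {a\<in>{1..n}. coprime a n} (Suc (size (prime_factorization n)))"
  unfolding has_A_zero_sum_def
proof
  fix g :: "nat \<Rightarrow> int"
  define k where "k = size (prime_factorization n)"
  define SL where "SL = (SIGMA p:prime_factors n. {..<multiplicity p n})"
  have finSL: "finite SL" by (simp add: SL_def)
  have cardSL: "card SL = k"
  proof -
    have "card SL = (\<Sum>p\<in>prime_factors n. multiplicity p n)" by (simp add: SL_def)
    also have "\<dots> = (\<Sum>p\<in>prime_factors n. count (prime_factorization n) p)"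
      by (intro sum.cong) (auto simp: count_prime_factorization_prime in_prime_factors_imp_prime)
    also have "\<dots> = k" by (simp add: k_def size_multiset_overloaded_eq)
    finally show ?thesis .
  qed
  define Par where "Par S = {s\<in>SL. odd (card {i\<in>S. bitp (fst s) (snd s) (g i)})}" for S
  have "Par ` Pow {..<Suc k} \<subseteq> Pow SL" by (auto simp: Par_def)
  then have "card (Par ` Pow {..<Suc k}) \<le> card (Pow SL)" using finSL by (intro card_mono) auto
  then have "card (Par ` Pow {..<Suc k}) \<le> 2^k" using finSL cardSL by (simp add: card_Pow)
  moreover have "card (Pow {..<Suc k}) = 2^Suc k" by (simp add: card_Pow)
  ultimately have "\<not> inj_on Par (Pow {..<Suc k})" using card_image by fastforce
  then obtain S T where ST: "S \<subseteq> {..<Suc k}" "T \<subseteq> {..<Suc k}" "S \<noteq> T" "Par S = Par T"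
    unfolding inj_on_def by auto
  have finST: "finite S" "finite T" using ST finite_subset by blast+
  define F where "F = (S - T) \<union> (T - S)"
  have finF: "finite F" using finST by (simp add: F_def)
  have Fsub: "F \<subseteq> {..<Suc k}" "F \<noteq> {}" using ST by (auto simp: F_def)
  have evenF: "even (card {i\<in>F. bitp p l (g i)})" if "p \<in> prime_factors n" "l < multiplicity p n" for p l
  proof -
    have s: "(p,l) \<in> SL" using that by (simp add: SL_def)
    have "(p,l) \<in> Par S \<longleftrightarrow> (p,l) \<in> Par T" using ST(4) by simp
    then have "odd (card {i\<in>S. bitp p l (g i)}) \<longleftrightarrow> odd (card {i\<in>T. bitp p l (g i)})"
      using s unfolding Par_def by simp
    then show ?thesis using card_symdiff_parity[OF finST, of "\<lambda>i. bitp p l (g i)"] unfolding F_def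
      by presburger
  qed
  have "\<forall>p\<in>prime_factors n. \<exists>v. (\<forall>i. \<not> p dvd v i) \<and> (int p)^(multiplicity p n) dvd (\<Sum>i\<in>F. int (v i) * g i)"
  proof
    fix p assume pP: "p \<in> prime_factors n"
    then have "prime p" by (simp add: in_prime_factors_imp_prime)
    then show "\<exists>v. (\<forall>i. \<not> p dvd v i) \<and> (int p)^(multiplicity p n) dvd (\<Sum>i\<in>F. int (v i) * g i)"
      using local_weights[of p F "multiplicity p n" g] finF evenF[OF pP] by blast
  qed
  then obtain V where V: "\<forall>p\<in>prime_factors n. (\<forall>i. \<not> p dvd V p i) \<and>
      (int p)^(multiplicity p n) dvd (\<Sum>i\<in>F. int (V p i) * g i)"
    by metis
  have copP: "\<forall>p\<in>prime_factors n. \<forall>q\<in>prime_factors n. p \<noteq> q \<longrightarrow>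
      coprime (p^multiplicity p n) (q^multiplicity q n)"
    by (auto simp: in_prime_factors_imp_prime primes_coprime)
  have "\<exists>w. \<forall>p\<in>prime_factors n. [w = V p i] (mod p^(multiplicity p n))" for i
    by (rule chinese_remainder_nat) (use copP in auto)
  then obtain W where W: "\<And>i. \<forall>p\<in>prime_factors n. [W i = V p i] (mod p^(multiplicity p n))" by metis
  define c where "c i = W i mod n" for i
  have copW: "coprime (W i) n" for i
  proof (rule ccontr)
    assume "\<not> coprime (W i) n"
    then obtain r where r: "r dvd W i" "r dvd n" "\<not> is_unit r" by (rule not_coprimeE)
    have "r \<noteq> 0"
    proof
      assume "r = 0" then have "n = 0" using r(2) by simp
      then show False using n by simp
    qed
    then obtain q where q: "q dvd r" "prime q" using prime_divisor_exists r(3) by blast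
    have qn: "q dvd n" "q dvd W i" using q r dvd_trans by blast+
    then have qP: "q \<in> prime_factors n" using n q by (auto simp: in_prime_factors_iff)
    have "multiplicity q n > 0" using qn q n by (simp add: prime_multiplicity_gt_zero_iff)
    then have "q dvd q^multiplicity q n" by (simp add: dvd_power)
    then have "[W i = V q i] (mod q)" using W[of i] qP cong_dvd_modulus_nat by blast
    then have "q dvd V q i" using qn(2) cong_dvd_iff by blast
    then show False using V qP by blast
  qed
  have cA: "\<forall>i\<in>F. c i \<in> {a\<in>{1..n}. coprime a n}"
  proof
    fix i
    have "c i \<noteq> 0"
    proof
      assume "c i = 0"
      then have "n dvd W i" by (simp add: c_def dvd_eq_mod_eq_0)
      then have "is_unit n" using copW[of i] by (metis coprime_absorb_right coprime_commute)
      then show False using n by simp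
    qed
    moreover have "c i < n" using n by (simp add: c_def)
    moreover have "coprime (c i) n" using copW[of i] n by (simp add: c_def)
    ultimately show "c i \<in> {a\<in>{1..n}. coprime a n}" by auto
  qed
  have pdvd: "(int p)^(multiplicity p n) dvd (\<Sum>i\<in>F. int (c i) * g i)" if pP: "p \<in> prime_factors n" for p
  proof -
    have cg: "[(\<Sum>i\<in>F. int (c i) * g i) = (\<Sum>i\<in>F. int (V p i) * g i)] (mod int (p ^ multiplicity p n))"
    proof (rule cong_sum, rule cong_mult[OF _ cong_refl])
      fix i
      have pm: "p ^ multiplicity p n dvd n" by (simp add: multiplicity_dvd)
      have "[c i = W i] (mod n)" by (simp add: c_def)
      then have "[c i = W i] (mod p ^ multiplicity p n)" using pm cong_dvd_modulus_nat by blast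
      then have "[c i = V p i] (mod p ^ multiplicity p n)" using W[of i] pP cong_trans by blast
      then show "[int (c i) = int (V p i)] (mod int (p ^ multiplicity p n))" by (simp only: cong_int_iff)
    qed
    have hv: "int (p ^ multiplicity p n) dvd (\<Sum>i\<in>F. int (V p i) * g i)" using V pP by simp
    then show ?thesis using cong_dvd_iff[OF cg] by simp
  qed
  have "int n = int (\<Prod>p\<in>prime_factors n. p ^ multiplicity p n)"
    using n prod_prime_factors[of n] by simp
  also have "\<dots> = (\<Prod>p\<in>prime_factors n. (int p) ^ multiplicity p n)" by simp
  also have "\<dots> dvd (\<Sum>i\<in>F. int (c i) * g i)"
  proof (rule prod_dvd_int)
    show "\<forall>i\<in>prime_factors n. \<forall>j\<in>prime_factors n. i \<noteq> j \<longrightarrow>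
        coprime (int i ^ multiplicity i n) (int j ^ multiplicity j n)"
    proof (intro ballI impI)
      fix i j assume "i \<in> prime_factors n" "j \<in> prime_factors n" "i \<noteq> j"
      then have "coprime (i ^ multiplicity i n) (j ^ multiplicity j n)" using copP by blast
      then have "coprime (int (i ^ multiplicity i n)) (int (j ^ multiplicity j n))" by (simp only: coprime_int_iff)
      then show "coprime (int i ^ multiplicity i n) (int j ^ multiplicity j n)" by simp
    qed
    show "\<forall>i\<in>prime_factors n. int i ^ multiplicity i n dvd (\<Sum>i\<in>F. int (c i) * g i)"
      using pdvd by blast
  qed simp
  finally have "[(\<Sum>i\<in>F. int (c i) * g i) = 0] (mod int n)" by (simp add: cong_0_iff)
  then show "\<exists>I c. I \<subseteq> {..<Suc (size (prime_factorization n))} \<and> I \<noteq> {} \<and>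
      (\<forall>i\<in>I. c i \<in> {a\<in>{1..n}. coprime a n}) \<and> [(\<Sum>i\<in>I. int (c i) * g i) = 0] (mod int n)"
    using Fsub cA unfolding k_def by blast
qed



lemma prod_take_dvd:
  fixes L :: "nat list"
  assumes "j \<le> j'" shows "prod_list (take j L) dvd prod_list (take j' L)"
proof -
  have "take j' L = take j L @ take (j' - j) (drop j L)"
    using assms take_add[of j "j' - j" L] by simp
  then show ?thesis by simp
qed

lemma part3_lower:
  assumes n: "1 < n"
  shows "\<not> has_A_zero_sum n {a\<in>{1..n}. coprime a n} (size (prime_factorization n))"
proof
  obtain L where L: "mset L = prime_factorization n" using ex_mset by blast
  have lenL: "length L = size (prime_factorization n)" using L by (metis size_mset)
  have primeL: "\<forall>p\<in>set L. prime p" using L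
    by (metis in_prime_factors_imp_prime set_mset_mset)
  have dvdL: "\<forall>p\<in>set L. p dvd n" using L
    by (metis in_prime_factors_iff set_mset_mset)
  have "n \<noteq> 0" using n by simp
  then have "prod_mset (prime_factorization n) = n" by (simp add: prod_mset_prime_factorization)
  then have prodL: "prod_list L = n" using L by (metis prod_mset_prod_list)
  define g where "g j = int (prod_list (take j L))" for j
  assume "has_A_zero_sum n {a\<in>{1..n}. coprime a n} (size (prime_factorization n))"
  then obtain I :: "nat set" and c where I: "I \<subseteq> {..<length L}" "I \<noteq> {}" "\<forall>i\<in>I. c i \<in> {a\<in>{1..n}. coprime a n}"
      "[(\<Sum>i\<in>I. int (c i) * g i) = 0] (mod int n)"
    unfolding has_A_zero_sum_def lenL by (elim allE[where x=g]) blast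
  have finI: "finite I" using I(1) finite_subset by blast
  define j where "j = Min I"
  have jI: "j \<in> I" using finI I(2) by (simp add: j_def)
  have jL: "j < length L" using jI I(1) by auto
  define p where "p = L ! j"
  have pL: "p \<in> set L" using jL by (simp add: p_def)
  define q where "q = prod_list (take (Suc j) L)"
  have qeq: "q = prod_list (take j L) * p" using jL by (simp add: q_def p_def take_Suc_conv_app_nth)
  have qn: "q dvd n"
  proof -
    have "q dvd prod_list (take (length L) L)" unfolding q_def using jL by (intro prod_take_dvd) simp
    then show ?thesis using prodL by simp
  qed
  have rest: "int q dvd (\<Sum>i\<in>I - {j}. int (c i) * g i)"
  proof (rule dvd_sum)
    fix i assume "i \<in> I - {j}"
    then have "j < i" using finI j_def by (metis DiffE Min_le insertI1 le_neq_implies_less)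
    then have "q dvd prod_list (take i L)" unfolding q_def by (intro prod_take_dvd) simp
    then have "int q dvd g i" by (simp add: g_def)
    then show "int q dvd int (c i) * g i" by simp
  qed
  have "int n dvd (\<Sum>i\<in>I. int (c i) * g i)" using I(4) by (simp add: cong_0_iff)
  then have "int q dvd (\<Sum>i\<in>I. int (c i) * g i)" using qn by (meson dvd_trans int_dvd_int_iff)
  moreover have "(\<Sum>i\<in>I. int (c i) * g i) = int (c j) * g j + (\<Sum>i\<in>I - {j}. int (c i) * g i)"
    using finI jI by (simp add: sum.remove)
  ultimately have "int q dvd int (c j) * g j" using rest by (metis dvd_add_left_iff)
  then have "g j * int p dvd g j * int (c j)" using qeq by (simp add: g_def mult.commute)
  moreover have "g j \<noteq> 0"
  proof -
    have "0 \<notin> set (take j L)" using primeL by (metis in_set_takeD not_prime_0)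
    then show ?thesis by (simp add: g_def prod_list_zero_iff)
  qed
  ultimately have "int p dvd int (c j)" by simp
  then have "p dvd c j" by (simp add: int_dvd_int_iff)
  moreover have "p dvd n" using dvdL pL by blast
  moreover have "coprime (c j) n" using I(3) jI by blast
  ultimately have "is_unit p" by (meson coprime_common_divisor)
  then show False using primeL pL by (metis not_prime_unit)
qed


theorem theorem2:
  fixes n :: nat
  assumes "1 < n" and "\<not> prime n"
  shows "(\<forall>a\<in>{1..n}. dA n {a} = n div gcd a n)
       \<and> (\<forall>a\<in>{1..n}. coprime a n \<longrightarrow> dA n {a, n - a} = 1 + nat \<lfloor>log 2 (real n)\<rfloor>)
       \<and> dA n {a\<in>{1..n}. coprime a n} = 1 + size (prime_factorization n)
       \<and> dA n {1..n - 1} = 2"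
proof (intro conjI ballI impI)
  fix a assume "a \<in> {1..n}"
  then show "dA n {a} = n div gcd a n" using part1 assms(1) by blast
next
  fix a assume "a \<in> {1..n}" "coprime a n"
  then show "dA n {a, n - a} = 1 + nat \<lfloor>log 2 (real n)\<rfloor>" using part2 assms(1) by blast
next
  show "dA n {a\<in>{1..n}. coprime a n} = 1 + size (prime_factorization n)"
    using dA_eqI2[OF part3_upper[OF assms(1)] part3_lower[OF assms(1)]] by simp
next
  show "dA n {1..n - 1} = 2" using part4 assms(1) by blast
qed

end
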